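(* For every $r\ge0$, $\gamma(h_r)=(-1)^{\binom r2}h_r^*$ and $\gamma(e_r)=(-1)^{\binom r2}e_r^*$ in $OSym$. Consequently $*\circ\gamma\circ\psi=\psi\circ*\circ\gamma$.
   Context: $\Bbbk$ is a field of characteristic $\neq2$. $OSym$ is the graded superalgebra generated by $h_r$ ($r\ge1$) of degree $2r$, parity $r\bmod 2$, subject to (with $h_0:=1$, $r\ge0,s\ge1$): $h_rh_s=h_sh_r$ if $r\equiv s\pmod2$; $h_rh_s+(-1)^rh_sh_r=(-1)^rh_{r+1}h_{s-1}+h_{s-1}h_{r+1}$ otherwise. Define $e_r$ by $\sum_{s=0}^r(-1)^se_sh_{r-s}=\delta_{r,0}$; the $e_r$ ($r\ge1$) generate $OSym$ subject to the same relations as the $h_r$. $\psi$ is the algebra automorphism of $OSym$ with $\psi(h_r)=(-1)^re_r$; $\gamma$ is the algebra involution with $\gamma(e_r)=(-1)^{\binom r2}e_r$; $*$ is the superalgebra anti-involution (i.e. $(ab)^*=(-1)^{\mathrm{par}(a)\mathrm{par}(b)}b^*a^*$) with $e_r^*=e_r$. *)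

theory Defs
  imports Main
begin

text \<open>The free associative unital algebra over a field on generators x_r (r \<ge> 1):
  elements are coefficient functions on words (lists of generator indices);
  the algebra proper is the set FA of finitely supported functions whose support
  avoids the letter 0. OSym is FA modulo the two-sided ideal osym_ideal; equality in
  OSym is the relation osym_eq.\<close>

type_synonym 'k fa = "nat list \<Rightarrow> 'k"

definition fa_zero :: "'k::field fa" where
  "fa_zero = (\<lambda>w. 0)"

definition fa_one :: "'k::field fa" where
  "fa_one = (\<lambda>w. if w = [] then 1 else 0)"

definition fa_gen :: "nat \<Rightarrow> 'k::field fa" where
  "fa_gen r = (\<lambda>w. if w = [r] then 1 else 0)"

definition fa_add :: "'k::field fa \<Rightarrow> 'k fa \<Rightarrow> 'k fa" where
  "fa_add p q = (\<lambda>w. p w + q w)"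

definition fa_smult :: "'k::field \<Rightarrow> 'k fa \<Rightarrow> 'k fa" where
  "fa_smult c p = (\<lambda>w. c * p w)"

definition fa_mult :: "'k::field fa \<Rightarrow> 'k fa \<Rightarrow> 'k fa" where
  "fa_mult p q = (\<lambda>w. \<Sum>i\<le>length w. p (take i w) * q (drop i w))"

definition FA :: "'k::field fa set" where
  "FA = {p. finite {w. p w \<noteq> 0} \<and> (\<forall>w. p w \<noteq> 0 \<longrightarrow> 0 \<notin> set w)}"

definition hgen :: "nat \<Rightarrow> 'k::field fa" where
  "hgen r = (if r = 0 then fa_one else fa_gen r)"

text \<open>e_r defined from sum_{s=0}^r (-1)^s e_s h_{r-s} = delta_{r,0}, i.e.
  e_0 = 1 and e_r = sum_{s<r} (-1)^(r-s+1) e_s h_{r-s} for r \<ge> 1.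
  elist n = [e_0, ..., e_n].\<close>
fun elist :: "nat \<Rightarrow> 'k::field fa list" where
  "elist 0 = [fa_one]"
| "elist (Suc n) = elist n @
     [foldr fa_add (map (\<lambda>s. fa_smult ((-1) ^ (Suc n - s + 1))
                              (fa_mult (elist n ! s) (hgen (Suc n - s)))) [0..<Suc n]) fa_zero]"

definition egen :: "nat \<Rightarrow> 'k::field fa" where
  "egen r = elist r ! r"

definition osym_rel :: "nat \<Rightarrow> nat \<Rightarrow> 'k::field fa" where
  "osym_rel r s =
    (if even (r + s) then
       fa_add (fa_mult (hgen r) (hgen s)) (fa_smult (-1) (fa_mult (hgen s) (hgen r)))
     else
       fa_add (fa_add (fa_mult (hgen r) (hgen s)) (fa_smult ((-1) ^ r) (fa_mult (hgen s) (hgen r))))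
         (fa_add (fa_smult (- ((-1) ^ r)) (fa_mult (hgen (r + 1)) (hgen (s - 1))))
                 (fa_smult (-1) (fa_mult (hgen (s - 1)) (hgen (r + 1))))))"

inductive_set osym_ideal :: "'k::field fa set" where
  rel: "1 \<le> s \<Longrightarrow> osym_rel r s \<in> osym_ideal"
| zero: "fa_zero \<in> osym_ideal"
| add: "a \<in> osym_ideal \<Longrightarrow> b \<in> osym_ideal \<Longrightarrow> fa_add a b \<in> osym_ideal"
| smult: "a \<in> osym_ideal \<Longrightarrow> fa_smult c a \<in> osym_ideal"
| lmult: "a \<in> osym_ideal \<Longrightarrow> x \<in> FA \<Longrightarrow> fa_mult x a \<in> osym_ideal"
| rmult: "a \<in> osym_ideal \<Longrightarrow> x \<in> FA \<Longrightarrow> fa_mult a x \<in> osym_ideal"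

definition osym_eq :: "'k::field fa \<Rightarrow> 'k fa \<Rightarrow> bool" where
  "osym_eq a b \<longleftrightarrow> fa_add a (fa_smult (-1) b) \<in> osym_ideal"

definition pure :: "nat \<Rightarrow> 'k::field fa \<Rightarrow> bool" where
  "pure p a \<longleftrightarrow> (\<forall>w. a w \<noteq> 0 \<longrightarrow> sum_list w mod 2 = p)"

text \<open>A map on representatives inducing a well-defined linear map of OSym.\<close>
definition osym_linear :: "('k::field fa \<Rightarrow> 'k fa) \<Rightarrow> bool" where
  "osym_linear \<phi> \<longleftrightarrow>
     (\<forall>a\<in>FA. \<phi> a \<in> FA) \<and>
     (\<forall>a\<in>FA. \<forall>b\<in>FA. osym_eq a b \<longrightarrow> osym_eq (\<phi> a) (\<phi> b)) \<and>
     (\<forall>a\<in>FA. \<forall>b\<in>FA. osym_eq (\<phi> (fa_add a b)) (fa_add (\<phi> a) (\<phi> b))) \<and>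
     (\<forall>c. \<forall>a\<in>FA. osym_eq (\<phi> (fa_smult c a)) (fa_smult c (\<phi> a)))"

definition osym_hom :: "('k::field fa \<Rightarrow> 'k fa) \<Rightarrow> bool" where
  "osym_hom \<phi> \<longleftrightarrow> osym_linear \<phi> \<and>
     (\<forall>a\<in>FA. \<forall>b\<in>FA. osym_eq (\<phi> (fa_mult a b)) (fa_mult (\<phi> a) (\<phi> b))) \<and>
     osym_eq (\<phi> fa_one) fa_one"

definition osym_bij :: "('k::field fa \<Rightarrow> 'k fa) \<Rightarrow> bool" where
  "osym_bij \<phi> \<longleftrightarrow>
     (\<forall>a\<in>FA. \<forall>b\<in>FA. osym_eq (\<phi> a) (\<phi> b) \<longrightarrow> osym_eq a b) \<and>
     (\<forall>b\<in>FA. \<exists>a\<in>FA. osym_eq (\<phi> a) b)"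

definition osym_super_antihom :: "('k::field fa \<Rightarrow> 'k fa) \<Rightarrow> bool" where
  "osym_super_antihom \<phi> \<longleftrightarrow> osym_linear \<phi> \<and>
     (\<forall>p q. \<forall>a\<in>FA. \<forall>b\<in>FA. pure p a \<longrightarrow> pure q b \<longrightarrow>
        osym_eq (\<phi> (fa_mult a b)) (fa_smult ((-1) ^ (p * q)) (fa_mult (\<phi> b) (\<phi> a)))) \<and>
     osym_eq (\<phi> fa_one) fa_one"

definition osym_involutive :: "('k::field fa \<Rightarrow> 'k fa) \<Rightarrow> bool" where
  "osym_involutive \<phi> \<longleftrightarrow> (\<forall>a\<in>FA. osym_eq (\<phi> (\<phi> a)) a)"

end

theory Submission
  imports Defs
begin



definition fsum :: "'i set \<Rightarrow> ('i \<Rightarrow> 'k::field fa) \<Rightarrow> 'k fa" where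
  "fsum A f = (\<lambda>w. \<Sum>i\<in>A. f i w)"

lemma fa_mult_add_left: "fa_mult (fa_add p q) r = fa_add (fa_mult p r) (fa_mult q r)"
  by (auto simp: fa_mult_def fa_add_def distrib_right sum.distrib)
lemma fa_mult_add_right: "fa_mult r (fa_add p q) = fa_add (fa_mult r p) (fa_mult r q)"
  by (auto simp: fa_mult_def fa_add_def distrib_left sum.distrib)
lemma fa_mult_smult_left: "fa_mult (fa_smult c p) r = fa_smult c (fa_mult p r)"
  by (auto simp: fa_mult_def fa_smult_def sum_distrib_left mult.assoc)
lemma fa_mult_smult_right: "fa_mult r (fa_smult c p) = fa_smult c (fa_mult r p)"
  by (auto simp: fa_mult_def fa_smult_def sum_distrib_left mult.left_commute)
lemma fa_mult_fsum_left: "fa_mult (fsum A f) r = fsum A (\<lambda>i. fa_mult (f i) r)"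
  unfolding fa_mult_def fsum_def by (auto simp: sum_distrib_right intro!: ext sum.swap)
lemma fa_mult_fsum_right: "fa_mult r (fsum A f) = fsum A (\<lambda>i. fa_mult r (f i))"
  unfolding fa_mult_def fsum_def by (auto simp: sum_distrib_left intro!: ext sum.swap)
lemma fa_mult_zero_left[simp]: "fa_mult fa_zero r = fa_zero"
  by (auto simp: fa_mult_def fa_zero_def)
lemma fa_mult_zero_right[simp]: "fa_mult r fa_zero = fa_zero"
  by (auto simp: fa_mult_def fa_zero_def)

lemma fa_mult_one_left[simp]: "fa_mult fa_one p = p"
proof
  fix w :: "nat list"
  have "fa_mult fa_one p w = (\<Sum>i\<le>length w. if i = 0 then p w else 0)"
    unfolding fa_mult_def fa_one_def by (rule sum.cong) auto
  also have "\<dots> = p w" by (simp add: sum.delta)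
  finally show "fa_mult fa_one p w = p w" .
qed

lemma fa_mult_one_right[simp]: "fa_mult p fa_one = p"
proof
  fix w :: "nat list"
  have "fa_mult p fa_one w = (\<Sum>i\<le>length w. if i = length w then p w else 0)"
    unfolding fa_mult_def fa_one_def by (rule sum.cong) auto
  also have "\<dots> = p w" by (simp add: sum.delta)
  finally show "fa_mult p fa_one w = p w" .
qed

lemma fa_mult_assoc: "fa_mult (fa_mult p q) r = fa_mult p (fa_mult q r)"
proof
  fix w :: "nat list"
  define n where "n = length w"
  define g where "g = (\<lambda>j k. p (take j w) * q (take k (drop j w)) * r (drop (j+k) w))"
  have "fa_mult (fa_mult p q) r w = (\<Sum>i\<le>n. \<Sum>j\<le>i. g j (i - j))"
    unfolding fa_mult_def n_def g_def
    by (auto simp: sum_distrib_right min_def drop_take intro!: sum.cong)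
  also have "\<dots> = (\<Sum>(j,k)\<in>{(j,k). j+k \<le> n}. g j k)"
    by (rule sum.triangle_reindex_eq[symmetric])
  also have "{(j,k). j+k \<le> n} = Sigma {..n} (\<lambda>j. {..n-j})" by auto
  also have "(\<Sum>(j,k)\<in>Sigma {..n} (\<lambda>j. {..n-j}). g j k) = (\<Sum>j\<le>n. \<Sum>k\<le>n-j. g j k)"
    by (rule sum.Sigma[symmetric]) auto
  also have "\<dots> = fa_mult p (fa_mult q r) w"
    unfolding fa_mult_def n_def g_def
    by (auto simp: sum_distrib_left mult.assoc add.commute intro!: sum.cong)
  finally show "fa_mult (fa_mult p q) r w = fa_mult p (fa_mult q r) w" .
qed




lemma fsum_empty[simp]: "fsum {} f = fa_zero"
  by (simp add: fsum_def fa_zero_def)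
lemma fsum_insert: "finite A \<Longrightarrow> x \<notin> A \<Longrightarrow> fsum (insert x A) f = fa_add (f x) (fsum A f)"
  by (simp add: fsum_def fa_add_def)

lemma osym_eq_refl[simp]: "osym_eq a a"
proof -
  have "fa_add a (fa_smult (-1) a) = fa_zero" by (auto simp: fa_add_def fa_smult_def fa_zero_def)
  then show ?thesis unfolding osym_eq_def using osym_ideal.zero by simp
qed

lemma osym_eq_sym: "osym_eq a b \<Longrightarrow> osym_eq b a"
proof -
  assume "osym_eq a b"
  then have "fa_smult (-1) (fa_add a (fa_smult (-1) b)) \<in> osym_ideal" unfolding osym_eq_def
    by (rule osym_ideal.smult)
  moreover have "fa_smult (-1) (fa_add a (fa_smult (-1) b)) = fa_add b (fa_smult (-1) a)"
    by (auto simp: fa_add_def fa_smult_def)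
  ultimately show ?thesis unfolding osym_eq_def by simp
qed

lemma osym_eq_trans[trans]: "osym_eq a b \<Longrightarrow> osym_eq b c \<Longrightarrow> osym_eq a c"
proof -
  assume "osym_eq a b" "osym_eq b c"
  then have "fa_add (fa_add a (fa_smult (-1) b)) (fa_add b (fa_smult (-1) c)) \<in> osym_ideal"
    unfolding osym_eq_def by (rule osym_ideal.add)
  moreover have "fa_add (fa_add a (fa_smult (-1) b)) (fa_add b (fa_smult (-1) c)) = fa_add a (fa_smult (-1) c)"
    by (auto simp: fa_add_def fa_smult_def)
  ultimately show ?thesis unfolding osym_eq_def by simp
qed

lemma osym_eq_eq: "a = b \<Longrightarrow> osym_eq a b" by simp

lemma osym_eq_add: "osym_eq a a' \<Longrightarrow> osym_eq b b' \<Longrightarrow> osym_eq (fa_add a b) (fa_add a' b')"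
proof -
  assume "osym_eq a a'" "osym_eq b b'"
  then have "fa_add (fa_add a (fa_smult (-1) a')) (fa_add b (fa_smult (-1) b')) \<in> osym_ideal"
    unfolding osym_eq_def by (rule osym_ideal.add)
  moreover have "fa_add (fa_add a (fa_smult (-1) a')) (fa_add b (fa_smult (-1) b')) = fa_add (fa_add a b) (fa_smult (-1) (fa_add a' b'))"
    by (auto simp: fa_add_def fa_smult_def)
  ultimately show ?thesis unfolding osym_eq_def by simp
qed

lemma osym_eq_smult: "osym_eq a a' \<Longrightarrow> osym_eq (fa_smult c a) (fa_smult c a')"
proof -
  assume "osym_eq a a'"
  then have "fa_smult c (fa_add a (fa_smult (-1) a')) \<in> osym_ideal"
    unfolding osym_eq_def by (rule osym_ideal.smult)
  moreover have "fa_smult c (fa_add a (fa_smult (-1) a')) = fa_add (fa_smult c a) (fa_smult (-1) (fa_smult c a'))"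
    by (auto simp: fa_add_def fa_smult_def algebra_simps)
  ultimately show ?thesis unfolding osym_eq_def by simp
qed

lemma osym_eq_mult_left: "x \<in> FA \<Longrightarrow> osym_eq a a' \<Longrightarrow> osym_eq (fa_mult x a) (fa_mult x a')"
proof -
  assume "x \<in> FA" "osym_eq a a'"
  then have "fa_mult x (fa_add a (fa_smult (-1) a')) \<in> osym_ideal"
    unfolding osym_eq_def by (intro osym_ideal.lmult)
  then show ?thesis unfolding osym_eq_def by (simp add: fa_mult_add_right fa_mult_smult_right)
qed

lemma osym_eq_mult_right: "x \<in> FA \<Longrightarrow> osym_eq a a' \<Longrightarrow> osym_eq (fa_mult a x) (fa_mult a' x)"
proof -
  assume "x \<in> FA" "osym_eq a a'"
  then have "fa_mult (fa_add a (fa_smult (-1) a')) x \<in> osym_ideal"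
    unfolding osym_eq_def by (intro osym_ideal.rmult)
  then show ?thesis unfolding osym_eq_def by (simp add: fa_mult_add_left fa_mult_smult_left)
qed

lemma osym_eq_mult: "a' \<in> FA \<Longrightarrow> b \<in> FA \<Longrightarrow> osym_eq a a' \<Longrightarrow> osym_eq b b' \<Longrightarrow>
   osym_eq (fa_mult a b) (fa_mult a' b')"
  by (meson osym_eq_mult_left osym_eq_mult_right osym_eq_trans)

lemma osym_eq_fsum: "finite A \<Longrightarrow> (\<And>i. i \<in> A \<Longrightarrow> osym_eq (f i) (g i)) \<Longrightarrow> osym_eq (fsum A f) (fsum A g)"
  by (induction A rule: finite_induct) (auto simp: fsum_insert intro: osym_eq_add)

lemma FA_zero[simp]: "fa_zero \<in> FA" by (simp add: FA_def fa_zero_def)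
lemma FA_one[simp]: "fa_one \<in> FA" by (simp add: FA_def fa_one_def)
lemma FA_gen: "r \<ge> 1 \<Longrightarrow> fa_gen r \<in> FA" by (auto simp: FA_def fa_gen_def)
lemma FA_hgen[simp]: "hgen r \<in> FA" by (auto simp: hgen_def FA_gen)

lemma FA_add[simp]: "p \<in> FA \<Longrightarrow> q \<in> FA \<Longrightarrow> fa_add p q \<in> FA"
proof -
  assume p: "p \<in> FA" and q: "q \<in> FA"
  have "{w. fa_add p q w \<noteq> 0} \<subseteq> {w. p w \<noteq> 0} \<union> {w. q w \<noteq> 0}" by (auto simp: fa_add_def)
  moreover have "finite ({w. p w \<noteq> 0} \<union> {w. q w \<noteq> 0})" using p q by (auto simp: FA_def)
  ultimately show ?thesis using p q unfolding FA_def by (auto simp: fa_add_def intro: finite_subset)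
qed

lemma FA_smult[simp]: "p \<in> FA \<Longrightarrow> fa_smult c p \<in> FA"
proof -
  assume p: "p \<in> FA"
  have "{w. fa_smult c p w \<noteq> 0} \<subseteq> {w. p w \<noteq> 0}" by (auto simp: fa_smult_def)
  then show ?thesis using p unfolding FA_def by (auto simp: fa_smult_def intro: finite_subset)
qed

lemma FA_mult[simp]: "p \<in> FA \<Longrightarrow> q \<in> FA \<Longrightarrow> fa_mult p q \<in> FA"
proof -
  assume p: "p \<in> FA" and q: "q \<in> FA"
  have sub: "\<exists>i. p (take i w) \<noteq> 0 \<and> q (drop i w) \<noteq> 0" if "fa_mult p q w \<noteq> 0" for w
  proof (rule ccontr)
    assume "\<not> ?thesis"
    then have "fa_mult p q w = 0" unfolding fa_mult_def by (intro sum.neutral) auto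
    then show False using that by simp
  qed
  have "{w. fa_mult p q w \<noteq> 0} \<subseteq> (\<lambda>(u,v). u @ v) ` ({w. p w \<noteq> 0} \<times> {w. q w \<noteq> 0})"
  proof
    fix w assume "w \<in> {w. fa_mult p q w \<noteq> 0}"
    then obtain i where "p (take i w) \<noteq> 0" "q (drop i w) \<noteq> 0" using sub by blast
    then show "w \<in> (\<lambda>(u,v). u @ v) ` ({w. p w \<noteq> 0} \<times> {w. q w \<noteq> 0})"
      by (intro image_eqI[where x="(take i w, drop i w)"]) auto
  qed
  moreover have "finite ((\<lambda>(u,v). u @ v) ` ({w. p w \<noteq> 0} \<times> {w. q w \<noteq> 0}))"
    using p q by (auto simp: FA_def)
  moreover have "0 \<notin> set w" if nz: "fa_mult p q w \<noteq> 0" for w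
  proof -
    obtain i where "p (take i w) \<noteq> 0" "q (drop i w) \<noteq> 0" using sub[OF nz] by blast
    then have "0 \<notin> set (take i w)" "0 \<notin> set (drop i w)" using p q by (auto simp: FA_def)
    then show ?thesis by (metis Un_iff append_take_drop_id set_append)
  qed
  ultimately show ?thesis unfolding FA_def by (auto intro: finite_subset)
qed

lemma FA_fsum: "finite A \<Longrightarrow> (\<And>i. i \<in> A \<Longrightarrow> f i \<in> FA) \<Longrightarrow> fsum A f \<in> FA"
  by (induction A rule: finite_induct) (auto simp: fsum_insert)




lemma foldr_fsum: "distinct xs \<Longrightarrow> foldr fa_add (map f xs) fa_zero = fsum (set xs) f"
  by (induction xs) (auto simp: fsum_insert)

lemma length_elist[simp]: "length (elist n) = Suc n"
  by (induction n) auto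

lemma elist_nth: "s \<le> n \<Longrightarrow> elist n ! s = egen s"
proof (induction n)
  case 0 then show ?case by (simp add: egen_def)
next
  case (Suc n)
  show ?case
  proof (cases "s = Suc n")
    case True then show ?thesis by (simp add: egen_def)
  next
    case False
    then have "s \<le> n" using Suc.prems by simp
    then show ?thesis using Suc.IH by (simp add: nth_append)
  qed
qed

lemma egen_0[simp]: "egen 0 = fa_one" by (simp add: egen_def)

lemma egen_Suc: "egen (Suc n) = fsum {..<Suc n} (\<lambda>s. fa_smult ((-1) ^ (Suc n - s + 1))
                              (fa_mult (egen s) (hgen (Suc n - s))))"
proof -
  have "egen (Suc n) = foldr fa_add (map (\<lambda>s. fa_smult ((-1) ^ (Suc n - s + 1))
                              (fa_mult (elist n ! s) (hgen (Suc n - s)))) [0..<Suc n]) fa_zero"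
    by (simp add: egen_def nth_append)
  also have "\<dots> = fsum {..<Suc n} (\<lambda>s. fa_smult ((-1) ^ (Suc n - s + 1))
                              (fa_mult (elist n ! s) (hgen (Suc n - s))))"
    by (simp only: foldr_fsum distinct_upt set_upt atLeast0LessThan)
  also have "\<dots> = fsum {..<Suc n} (\<lambda>s. fa_smult ((-1) ^ (Suc n - s + 1))
                              (fa_mult (egen s) (hgen (Suc n - s))))"
    unfolding fsum_def by (intro ext sum.cong refl) (simp add: elist_nth)
  finally show ?thesis .
qed

lemma FA_egen[simp]: "(egen r :: 'k::field fa) \<in> FA"
proof (induction r rule: less_induct)
  case (less r)
  show ?case
  proof (cases r)
    case 0 then show ?thesis by simp
  next
    case (Suc n)
    have "(egen s :: 'k fa) \<in> FA" if "s \<in> {..<Suc n}" for s using less[of s] that Suc by simp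
    then show ?thesis unfolding Suc egen_Suc by (intro FA_fsum FA_smult FA_mult FA_hgen) simp_all
  qed
qed

lemma pure_one[simp]: "pure 0 fa_one" by (simp add: pure_def fa_one_def)
lemma pure_zero[simp]: "pure p fa_zero" by (simp add: pure_def fa_zero_def)
lemma pure_hgen: "pure (r mod 2) (hgen r)"
  unfolding pure_def hgen_def fa_one_def fa_gen_def by simp
lemma pure_add: "pure p a \<Longrightarrow> pure p b \<Longrightarrow> pure p (fa_add a b)"
proof -
  assume a: "pure p a" and b: "pure p b"
  show ?thesis unfolding pure_def
  proof (intro allI impI)
    fix w assume "fa_add a b w \<noteq> 0"
    then have "a w \<noteq> 0 \<or> b w \<noteq> 0" by (auto simp: fa_add_def)
    then show "sum_list w mod 2 = p" using a b unfolding pure_def by blast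
  qed
qed
lemma pure_smult: "pure p a \<Longrightarrow> pure p (fa_smult c a)"
  unfolding pure_def fa_smult_def by (metis mult_zero_right)
lemma pure_fsum: "finite A \<Longrightarrow> (\<And>i. i \<in> A \<Longrightarrow> pure p (f i)) \<Longrightarrow> pure p (fsum A f)"
  by (induction A rule: finite_induct) (simp_all add: fsum_insert pure_add)
lemma pure_mult: "pure p a \<Longrightarrow> pure q b \<Longrightarrow> pure ((p + q) mod 2) (fa_mult a b)"
proof -
  assume a: "pure p a" and b: "pure q b"
  show ?thesis unfolding pure_def
  proof (intro allI impI)
    fix w assume nz: "fa_mult a b w \<noteq> 0"
    have "\<exists>i. a (take i w) \<noteq> 0 \<and> b (drop i w) \<noteq> 0"
    proof (rule ccontr)
      assume "\<not> ?thesis"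
      then have "fa_mult a b w = 0" unfolding fa_mult_def by (intro sum.neutral) auto
      then show False using nz by simp
    qed
    then obtain i where "a (take i w) \<noteq> 0" "b (drop i w) \<noteq> 0" by blast
    then have "sum_list (take i w) mod 2 = p" "sum_list (drop i w) mod 2 = q"
      using a b by (auto simp: pure_def)
    moreover have "sum_list w = sum_list (take i w) + sum_list (drop i w)"
      by (metis append_take_drop_id sum_list_append)
    ultimately show "sum_list w mod 2 = (p + q) mod 2" by (metis mod_add_eq)
  qed
qed

lemma pure_egen: "pure (r mod 2) (egen r :: 'k::field fa)"
proof (induction r rule: less_induct)
  case (less r)
  show ?case
  proof (cases r)
    case 0 then show ?thesis by simp
  next
    case (Suc n)
    have "pure (Suc n mod 2) (fa_smult ((-1) ^ (Suc n - s + 1)) (fa_mult (egen s) (hgen (Suc n - s))) :: 'k fa)"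
      if "s < Suc n" for s
    proof -
      have "pure ((s mod 2 + (Suc n - s) mod 2) mod 2) (fa_mult (egen s) (hgen (Suc n - s)) :: 'k fa)"
        using less[of s] that Suc by (intro pure_mult pure_hgen) auto
      moreover have "(s mod 2 + (Suc n - s) mod 2) mod 2 = Suc n mod 2"
        using that by (metis le_add_diff_inverse less_imp_le mod_add_eq)
      ultimately show ?thesis by (metis pure_smult)
    qed
    then show ?thesis unfolding Suc egen_Suc by (intro pure_fsum) simp_all
  qed
qed

definition delta :: "nat \<Rightarrow> 'k::field fa" where
  "delta r = (if r = 0 then fa_one else fa_zero)"

definition Lsum :: "nat \<Rightarrow> 'k::field fa" where
  "Lsum r = fsum {..r} (\<lambda>s. fa_smult ((-1) ^ s) (fa_mult (egen s) (hgen (r - s))))"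
definition Rsum :: "nat \<Rightarrow> 'k::field fa" where
  "Rsum r = fsum {..r} (\<lambda>s. fa_smult ((-1) ^ s) (fa_mult (hgen (r - s)) (egen s)))"

lemma sign_lemma: "s < Suc n \<Longrightarrow> ((-1::'k::field) ^ Suc n) * (-1) ^ (Suc n - s + 1) = - ((-1) ^ s)"
proof -
  assume "s < Suc n"
  then have "Suc n + (Suc n - s + 1) = 2 * (Suc n - s) + s + 1" by simp
  then have "((-1::'k) ^ Suc n) * (-1) ^ (Suc n - s + 1) = (-1) ^ (2 * (Suc n - s) + s + 1)"
    by (metis power_add)
  also have "\<dots> = - ((-1) ^ s)" by (simp add: power_add power_mult)
  finally show ?thesis .
qed

lemma Lsum_delta: "Lsum r = (delta r :: 'k::field fa)"
proof (cases r)
  case 0 then show ?thesis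
    by (auto simp: Lsum_def delta_def fsum_def hgen_def fa_smult_def intro!: ext)
next
  case (Suc n)
  show ?thesis
  proof
    fix w
    define g where "g = (\<lambda>s. (-1) ^ s * (fa_mult (egen s) (hgen (Suc n - s)) w :: 'k))"
    have "Lsum r w = (\<Sum>s\<le>Suc n. g s)"
      by (simp add: Lsum_def Suc fsum_def fa_smult_def g_def)
    also have "\<dots> = (\<Sum>s<Suc n. g s) + g (Suc n)"
      by (simp add: lessThan_Suc_atMost[symmetric] del: lessThan_Suc)
    also have "g (Suc n) = (-1) ^ Suc n * egen (Suc n) w"
      by (simp add: g_def hgen_def)
    also have "\<dots> = (\<Sum>s<Suc n. (-1) ^ Suc n * ((-1) ^ (Suc n - s + 1) * fa_mult (egen s) (hgen (Suc n - s)) w))"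
      by (simp only: egen_Suc fsum_def fa_smult_def sum_distrib_left)
    also have "\<dots> = (\<Sum>s<Suc n. - g s)"
    proof (rule sum.cong)
      fix x assume "x \<in> {..<Suc n}"
      then have x: "x < Suc n" by simp
      show "(-1) ^ Suc n * ((-1) ^ (Suc n - x + 1) * fa_mult (egen x) (hgen (Suc n - x)) w) = - g x"
        unfolding g_def mult.assoc[symmetric] sign_lemma[OF x] by simp
    qed simp
    finally show "Lsum r w = (delta r w :: 'k)" by (simp add: Suc delta_def fa_zero_def sum_negf)
  qed
qed




lemma fsum_cong: "(\<And>i. i \<in> A \<Longrightarrow> f i = g i) \<Longrightarrow> fsum A f = fsum A g"
  unfolding fsum_def by (intro ext sum.cong) auto

lemma fsum_swap_tri: "fsum {..(r::nat)} (\<lambda>i. fsum {..r-i} (\<lambda>s. F (r-i-s) s)) =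
   fsum {..r} (\<lambda>k. fsum {..r-k} (\<lambda>s. (F k s :: 'k::field fa)))"
proof
  fix w
  have "(\<Sum>i\<le>r. \<Sum>s\<le>r-i. F (r-i-s) s w) = (\<Sum>(i,s)\<in>Sigma {..r} (\<lambda>i. {..r-i}). F (r-i-s) s w)"
    by (rule sum.Sigma[of "{..r}" "\<lambda>i. {..r-i}"]) auto
  also have "\<dots> = (\<Sum>(k,s)\<in>Sigma {..r} (\<lambda>k. {..r-k}). F k s w)"
    by (rule sum.reindex_bij_witness[where i="\<lambda>(k,s). (r-k-s, s)" and j="\<lambda>(i,s). (r-i-s, s)"]) auto
  also have "\<dots> = (\<Sum>k\<le>r. \<Sum>s\<le>r-k. F k s w)"
    by (rule sum.Sigma[of "{..r}" "\<lambda>i. {..r-i}", symmetric]) auto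
  finally show "fsum {..r} (\<lambda>i. fsum {..r-i} (\<lambda>s. F (r-i-s) s)) w =
   fsum {..r} (\<lambda>k. fsum {..r-k} (\<lambda>s. F k s)) w" by (simp add: fsum_def)
qed

lemma Rsum_delta: "Rsum r = (delta r :: 'k::field fa)"
proof (induction r rule: less_induct)
  case (less r)
  define F where "F = (\<lambda>k s. fa_smult ((-1) ^ s) (fa_mult (fa_mult (hgen (r-k-s)) (egen s)) (hgen k)) :: 'k fa)"
  have L: "fsum {..r} (\<lambda>k. fa_mult (Rsum (r-k)) (hgen k)) = fsum {..r} (\<lambda>k. fsum {..r-k} (\<lambda>s. F k s))"
    unfolding Rsum_def F_def fa_mult_fsum_left fa_mult_smult_left
    by (intro fsum_cong) (simp add: diff_diff_add add.commute)
  have R: "fsum {..r} (\<lambda>i. fa_mult (hgen i) (Lsum (r-i))) = fsum {..r} (\<lambda>i. fsum {..r-i} (\<lambda>s. F (r-i-s) s))"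
    unfolding Lsum_def F_def fa_mult_fsum_right fa_mult_smult_right fa_mult_assoc
    by (intro fsum_cong) (simp add: diff_diff_add)
  have eq: "fsum {..r} (\<lambda>k. fa_mult (Rsum (r-k)) (hgen k)) = (fsum {..r} (\<lambda>i. fa_mult (hgen i) (Lsum (r-i))) :: 'k fa)"
    using L R fsum_swap_tri[of r F] by simp
  show ?case
  proof (cases "r = 0")
    case True
    then show ?thesis by (auto simp: Rsum_def delta_def fsum_def hgen_def fa_smult_def intro!: ext)
  next
    case False
    show ?thesis
    proof
      fix w
      have "fsum {..r} (\<lambda>k. fa_mult (Rsum (r-k)) (hgen k)) w =
            (\<Sum>k\<le>r. (if k = 0 then Rsum r w else 0) + (if k = r then hgen r w else (0::'k)))"
        unfolding fsum_def
      proof (rule sum.cong)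
        fix k assume "k \<in> {..r}"
        then have k: "k \<le> r" by simp
        show "fa_mult (Rsum (r-k)) (hgen k) w = (if k = 0 then Rsum r w else 0) + (if k = r then hgen r w else (0::'k))"
        proof (cases "k = 0")
          case True then show ?thesis using False by (simp add: hgen_def)
        next
          case k0: False
          then have "Rsum (r-k) = (delta (r-k) :: 'k fa)" using less[of "r-k"] k by simp
          then show ?thesis using k k0 by (auto simp: delta_def, simp add: fa_zero_def)
        qed
      qed simp
      also have "\<dots> = Rsum r w + hgen r w" by (simp add: sum.distrib)
      finally have 1: "fsum {..r} (\<lambda>k. fa_mult (Rsum (r-k)) (hgen k)) w = Rsum r w + (hgen r w :: 'k)" .
      have "fsum {..r} (\<lambda>i. fa_mult (hgen i) (Lsum (r-i))) w = (\<Sum>i\<le>r. if i = r then hgen r w else (0::'k))"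
        unfolding fsum_def Lsum_delta by (rule sum.cong) (auto simp: delta_def, simp add: fa_zero_def)
      also have "\<dots> = hgen r w" by simp
      finally show "Rsum r w = (delta r w :: 'k)" using 1 eq False by (simp add: delta_def fa_zero_def)
    qed
  qed
qed




lemma smult_smult[simp]: "fa_smult a (fa_smult b x) = fa_smult (a * b) x"
  by (auto simp: fa_smult_def)
lemma smult_one[simp]: "fa_smult 1 x = x"
  by (auto simp: fa_smult_def)
lemma smult_0[simp]: "fa_smult 0 x = fa_zero"
  by (auto simp: fa_smult_def fa_zero_def)
lemma smult_zero_fa[simp]: "fa_smult c fa_zero = fa_zero"
  by (auto simp: fa_smult_def fa_zero_def)

lemma lin_FA: "osym_linear \<phi> \<Longrightarrow> a \<in> FA \<Longrightarrow> \<phi> a \<in> FA"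
  by (simp add: osym_linear_def)
lemma lin_resp: "osym_linear \<phi> \<Longrightarrow> a \<in> FA \<Longrightarrow> b \<in> FA \<Longrightarrow> osym_eq a b \<Longrightarrow> osym_eq (\<phi> a) (\<phi> b)"
  by (simp add: osym_linear_def)
lemma lin_add: "osym_linear \<phi> \<Longrightarrow> a \<in> FA \<Longrightarrow> b \<in> FA \<Longrightarrow> osym_eq (\<phi> (fa_add a b)) (fa_add (\<phi> a) (\<phi> b))"
  by (simp add: osym_linear_def)
lemma lin_smult: "osym_linear \<phi> \<Longrightarrow> a \<in> FA \<Longrightarrow> osym_eq (\<phi> (fa_smult c a)) (fa_smult c (\<phi> a))"
  by (simp add: osym_linear_def)
lemma lin_zero: "osym_linear \<phi> \<Longrightarrow> osym_eq (\<phi> fa_zero) fa_zero"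
  using lin_smult[of \<phi> fa_zero 0] by simp

lemma lin_fsum: assumes lin: "osym_linear \<phi>" and fin: "finite A" and xs: "\<And>i. i \<in> A \<Longrightarrow> x i \<in> FA"
  shows "osym_eq (\<phi> (fsum A (\<lambda>i. fa_smult (c i) (x i)))) (fsum A (\<lambda>i. fa_smult (c i) (\<phi> (x i))))"
  using fin xs
proof (induction A rule: finite_induct)
  case empty then show ?case by (simp add: lin_zero lin)
next
  case (insert a A)
  have "osym_eq (\<phi> (fsum (insert a A) (\<lambda>i. fa_smult (c i) (x i))))
      (fa_add (\<phi> (fa_smult (c a) (x a))) (\<phi> (fsum A (\<lambda>i. fa_smult (c i) (x i)))))"
    unfolding fsum_insert[OF insert(1,2)] using insert
    by (intro lin_add FA_smult FA_fsum lin) auto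
  also have "osym_eq \<dots> (fa_add (fa_smult (c a) (\<phi> (x a))) (fsum A (\<lambda>i. fa_smult (c i) (\<phi> (x i)))))"
    using insert by (intro osym_eq_add lin_smult lin) auto
  finally show ?case unfolding fsum_insert[OF insert(1,2)] .
qed

lemma lin_comp: "osym_linear \<phi> \<Longrightarrow> osym_linear \<chi> \<Longrightarrow> osym_linear (\<lambda>x. \<phi> (\<chi> x))"
proof -
  assume p: "osym_linear \<phi>" and c: "osym_linear \<chi>"
  note pF = lin_FA[OF p] and cF = lin_FA[OF c]
  have 1: "\<forall>a\<in>FA. \<phi> (\<chi> a) \<in> FA" using pF cF by simp
  have 2: "osym_eq (\<phi> (\<chi> a)) (\<phi> (\<chi> b))" if "a \<in> FA" "b \<in> FA" "osym_eq a b" for a b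
    using that by (intro lin_resp[OF p] lin_resp[OF c]) (simp_all add: cF)
  have 3: "osym_eq (\<phi> (\<chi> (fa_add a b))) (fa_add (\<phi> (\<chi> a)) (\<phi> (\<chi> b)))" if "a \<in> FA" "b \<in> FA" for a b
  proof -
    have "osym_eq (\<phi> (\<chi> (fa_add a b))) (\<phi> (fa_add (\<chi> a) (\<chi> b)))"
      using that by (intro lin_resp[OF p] lin_add[OF c]) (simp_all add: cF)
    also have "osym_eq \<dots> (fa_add (\<phi> (\<chi> a)) (\<phi> (\<chi> b)))"
      using that by (intro lin_add[OF p]) (simp_all add: cF)
    finally show ?thesis .
  qed
  have 4: "osym_eq (\<phi> (\<chi> (fa_smult k a))) (fa_smult k (\<phi> (\<chi> a)))" if "a \<in> FA" for a k
  proof -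
    have "osym_eq (\<phi> (\<chi> (fa_smult k a))) (\<phi> (fa_smult k (\<chi> a)))"
      using that by (intro lin_resp[OF p] lin_smult[OF c]) (simp_all add: cF)
    also have "osym_eq \<dots> (fa_smult k (\<phi> (\<chi> a)))"
      using that by (intro lin_smult[OF p]) (simp_all add: cF)
    finally show ?thesis .
  qed
  show ?thesis unfolding osym_linear_def using 1 2 3 4 by blast
qed

lemma hom_lin: "osym_hom \<phi> \<Longrightarrow> osym_linear \<phi>" by (simp add: osym_hom_def)
lemma hom_mult: "osym_hom \<phi> \<Longrightarrow> a \<in> FA \<Longrightarrow> b \<in> FA \<Longrightarrow> osym_eq (\<phi> (fa_mult a b)) (fa_mult (\<phi> a) (\<phi> b))"
  by (simp add: osym_hom_def)
lemma hom_one: "osym_hom \<phi> \<Longrightarrow> osym_eq (\<phi> fa_one) fa_one" by (simp add: osym_hom_def)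
lemma anti_lin: "osym_super_antihom \<phi> \<Longrightarrow> osym_linear \<phi>" by (simp add: osym_super_antihom_def)
lemma anti_mult: "osym_super_antihom \<phi> \<Longrightarrow> a \<in> FA \<Longrightarrow> b \<in> FA \<Longrightarrow> pure p a \<Longrightarrow> pure q b \<Longrightarrow>
   osym_eq (\<phi> (fa_mult a b)) (fa_smult ((-1) ^ (p * q)) (fa_mult (\<phi> b) (\<phi> a)))"
  by (simp add: osym_super_antihom_def)
lemma anti_one: "osym_super_antihom \<phi> \<Longrightarrow> osym_eq (\<phi> fa_one) fa_one" by (simp add: osym_super_antihom_def)

lemma sign_mod: "((-1::'k::field) ^ ((a mod 2) * (b mod 2))) = (-1) ^ (a * b)"
  by (simp add: minus_one_power_iff even_mult_iff)

lemma choose2_Suc: "Suc m choose 2 = m + (m choose 2)"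
  by (simp add: numeral_2_eq_2)

lemma choose2_add: "(s + t) choose 2 = (s choose 2) + (t choose 2) + s * t"
  by (induction t) (simp_all add: choose2_Suc)

lemma sq_sign[simp]: "((-1::'k::field) ^ n) * (-1) ^ n = 1"
  by (simp add: minus_one_power_iff)

lemma osym_eq_from_sum: "osym_eq (fa_add x y) fa_zero \<Longrightarrow> osym_eq x (fa_smult (-1) y)"
proof -
  assume h: "osym_eq (fa_add x y) fa_zero"
  have "osym_eq (fa_add (fa_add x y) (fa_smult (-1) y)) (fa_add fa_zero (fa_smult (-1) y))"
    using h by (intro osym_eq_add) auto
  moreover have "fa_add (fa_add x y) (fa_smult (-1) y) = x" by (auto simp: fa_add_def fa_smult_def)
  moreover have "fa_add fa_zero (fa_smult (-1) y) = fa_smult (-1) y" by (auto simp: fa_add_def fa_zero_def)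
  ultimately show ?thesis by simp
qed

lemma fsum_smult: "fsum A (\<lambda>i. fa_smult c (f i)) = fa_smult c (fsum A f)"
  by (auto simp: fsum_def fa_smult_def sum_distrib_left)

lemma fsum_split0: "fsum {..Suc n} f = fa_add (f 0) (fsum {1..Suc n} f)"
proof -
  have "{..Suc n} = insert 0 {1..Suc n}" by auto
  then show ?thesis by (simp add: fsum_insert)
qed




lemma zero_choose2[simp]: "(0::nat) choose 2 = 0" by (simp add: numeral_2_eq_2)

lemma sign_rec: "((-1::'k::field) ^ s * (-1) ^ (t * s)) * (-1) ^ (t choose 2) =
   (-1) ^ ((s + t) choose 2) * ((-1) ^ s * (-1) ^ (s choose 2))"
proof -
  have e: "(s + t * s + (t choose 2)) + 2 * (s choose 2) = (s choose 2) + (t choose 2) + s * t + s + (s choose 2)"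
    by (simp add: algebra_simps)
  have "((-1::'k) ^ s * (-1) ^ (t * s)) * (-1) ^ (t choose 2) = (-1) ^ (s + t * s + (t choose 2))"
    by (simp add: power_add)
  also have "\<dots> = (-1) ^ ((s + t * s + (t choose 2)) + 2 * (s choose 2))"
    by (simp add: power_add power_mult)
  also have "\<dots> = (-1) ^ ((s choose 2) + (t choose 2) + s * t + s + (s choose 2))"
    by (simp only: e)
  also have "\<dots> = (-1) ^ ((s + t) choose 2) * ((-1) ^ s * (-1) ^ (s choose 2))"
    by (simp add: power_add choose2_add)
  finally show ?thesis .
qed

locale OS =
  fixes \<psi> \<gamma> st :: "'k::field fa \<Rightarrow> 'k fa"
  assumes psi_hom: "osym_hom \<psi>"
    and psi_h: "\<forall>r\<ge>1. osym_eq (\<psi> (hgen r)) (fa_smult ((-1) ^ r) (egen r))"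
    and gamma_hom: "osym_hom \<gamma>" and gamma_inv: "osym_involutive \<gamma>"
    and gamma_e: "\<forall>r\<ge>1. osym_eq (\<gamma> (egen r)) (fa_smult ((-1) ^ (r choose 2)) (egen r))"
    and st_anti: "osym_super_antihom st" and st_inv: "osym_involutive st"
    and st_e: "\<forall>r\<ge>1. osym_eq (st (egen r)) (egen r)"
begin

lemma psi_lin: "osym_linear \<psi>" using psi_hom by (rule hom_lin)
lemma gamma_lin: "osym_linear \<gamma>" using gamma_hom by (rule hom_lin)
lemma st_lin: "osym_linear st" using st_anti by (rule anti_lin)
lemma psi_FA[simp]: "a \<in> FA \<Longrightarrow> \<psi> a \<in> FA" using psi_lin by (rule lin_FA)
lemma gamma_FA[simp]: "a \<in> FA \<Longrightarrow> \<gamma> a \<in> FA" using gamma_lin by (rule lin_FA)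
lemma st_FA[simp]: "a \<in> FA \<Longrightarrow> st a \<in> FA" using st_lin by (rule lin_FA)

lemma gamma_e_all: "osym_eq (\<gamma> (egen s)) (fa_smult ((-1) ^ (s choose 2)) (egen s))"
proof (cases "s = 0")
  case True then show ?thesis using hom_one[OF gamma_hom] by simp
next
  case False then show ?thesis using gamma_e by simp
qed

lemma st_e_all: "osym_eq (st (egen s)) (egen s)"
proof (cases "s = 0")
  case True then show ?thesis using anti_one[OF st_anti] by simp
next
  case False then show ?thesis using st_e by simp
qed

lemma gamma_rec: assumes r: "1 \<le> r"
  shows "osym_eq (fsum {..r} (\<lambda>s. fa_smult ((-1) ^ s * (-1) ^ (s choose 2)) (fa_mult (egen s) (\<gamma> (hgen (r-s)))))) fa_zero"
proof -
  have "osym_eq fa_zero (\<gamma> fa_zero)" by (rule osym_eq_sym, rule lin_zero[OF gamma_lin])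
  also have "\<gamma> fa_zero = \<gamma> (Lsum r)" using r by (simp add: Lsum_delta delta_def)
  also have "osym_eq (\<gamma> (Lsum r)) (fsum {..r} (\<lambda>s. fa_smult ((-1) ^ s) (\<gamma> (fa_mult (egen s) (hgen (r-s))))))"
    unfolding Lsum_def by (rule lin_fsum[OF gamma_lin]) simp_all
  also have "osym_eq \<dots> (fsum {..r} (\<lambda>s. fa_smult ((-1) ^ s) (fa_mult (\<gamma> (egen s)) (\<gamma> (hgen (r-s))))))"
    by (intro osym_eq_fsum osym_eq_smult hom_mult[OF gamma_hom]) simp_all
  also have "osym_eq \<dots> (fsum {..r} (\<lambda>s. fa_smult ((-1) ^ s) (fa_mult (fa_smult ((-1) ^ (s choose 2)) (egen s)) (\<gamma> (hgen (r-s))))))"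
    by (intro osym_eq_fsum osym_eq_smult osym_eq_mult_right gamma_e_all) simp_all
  also have "\<dots> = fsum {..r} (\<lambda>s. fa_smult ((-1) ^ s * (-1) ^ (s choose 2)) (fa_mult (egen s) (\<gamma> (hgen (r-s)))))"
    by (simp add: fa_mult_smult_left)
  finally show ?thesis by (rule osym_eq_sym)
qed

lemma st_rec: assumes r: "1 \<le> r"
  shows "osym_eq (fsum {..r} (\<lambda>s. fa_smult ((-1) ^ s * (-1) ^ ((r-s) * s)) (fa_mult (egen s) (st (hgen (r-s)))))) fa_zero"
proof -
  have "osym_eq fa_zero (st fa_zero)" by (rule osym_eq_sym, rule lin_zero[OF st_lin])
  also have "st fa_zero = st (Rsum r)" using r by (simp add: Rsum_delta delta_def)
  also have "osym_eq (st (Rsum r)) (fsum {..r} (\<lambda>s. fa_smult ((-1) ^ s) (st (fa_mult (hgen (r-s)) (egen s)))))"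
    unfolding Rsum_def by (rule lin_fsum[OF st_lin]) simp_all
  also have "osym_eq \<dots> (fsum {..r} (\<lambda>s. fa_smult ((-1) ^ s) (fa_smult ((-1) ^ (((r-s) mod 2) * (s mod 2))) (fa_mult (st (egen s)) (st (hgen (r-s)))))))"
    by (intro osym_eq_fsum osym_eq_smult anti_mult[OF st_anti] pure_hgen pure_egen) simp_all
  also have "osym_eq \<dots> (fsum {..r} (\<lambda>s. fa_smult ((-1) ^ s) (fa_smult ((-1) ^ (((r-s) mod 2) * (s mod 2))) (fa_mult (egen s) (st (hgen (r-s)))))))"
    by (intro osym_eq_fsum osym_eq_smult osym_eq_mult_right st_e_all) simp_all
  also have "\<dots> = fsum {..r} (\<lambda>s. fa_smult ((-1) ^ s * (-1) ^ ((r-s) * s)) (fa_mult (egen s) (st (hgen (r-s)))))"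
    by (simp add: sign_mod)
  finally show ?thesis by (rule osym_eq_sym)
qed

end



context OS begin

lemma st_h: "osym_eq (st (hgen r)) (fa_smult ((-1) ^ (r choose 2)) (\<gamma> (hgen r)))"
proof (induction r rule: less_induct)
  case (less r)
  show ?case
  proof (cases r)
    case 0
    have "osym_eq (st fa_one) fa_one" by (rule anti_one[OF st_anti])
    also have "osym_eq fa_one (\<gamma> fa_one)" by (rule osym_eq_sym, rule hom_one[OF gamma_hom])
    finally show ?thesis using 0 by (simp add: hgen_def)
  next
    case (Suc n)
    define A where "A = (\<lambda>s. fa_smult ((-1) ^ s * (-1) ^ (s choose 2)) (fa_mult (egen s) (\<gamma> (hgen (r-s)))))"
    define B where "B = (\<lambda>s. fa_smult ((-1) ^ s * (-1) ^ ((r-s) * s)) (fa_mult (egen s) (st (hgen (r-s)))))"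
    have split: "fsum {..r} f = fa_add (f 0) (fsum {1..r} f)" for f :: "nat \<Rightarrow> 'k fa"
      unfolding Suc by (rule fsum_split0)
    have "osym_eq (fsum {..r} A) fa_zero" unfolding A_def using gamma_rec[of r] Suc by simp
    then have "osym_eq (fa_add (A 0) (fsum {1..r} A)) fa_zero" by (simp only: split)
    moreover have "A 0 = \<gamma> (hgen r)" by (simp add: A_def)
    ultimately have g1: "osym_eq (\<gamma> (hgen r)) (fa_smult (-1) (fsum {1..r} A))"
      by (simp add: osym_eq_from_sum)
    have "osym_eq (fsum {..r} B) fa_zero" unfolding B_def using st_rec[of r] Suc by simp
    then have "osym_eq (fa_add (B 0) (fsum {1..r} B)) fa_zero" by (simp only: split)
    moreover have "B 0 = st (hgen r)" by (simp add: B_def)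
    ultimately have s1: "osym_eq (st (hgen r)) (fa_smult (-1) (fsum {1..r} B))"
      by (simp add: osym_eq_from_sum)
    have bs: "osym_eq (B s) (fa_smult ((-1) ^ (r choose 2)) (A s))" if s: "s \<in> {1..r}" for s
    proof -
      have "osym_eq (B s) (fa_smult ((-1) ^ s * (-1) ^ ((r-s) * s)) (fa_mult (egen s) (fa_smult ((-1) ^ ((r-s) choose 2)) (\<gamma> (hgen (r-s))))))"
        unfolding B_def
      proof (intro osym_eq_smult osym_eq_mult_left FA_egen)
        show "osym_eq (st (hgen (r - s))) (fa_smult ((-1) ^ (r - s choose 2)) (\<gamma> (hgen (r - s))))"
          using s by (intro less) auto
      qed
      also have "\<dots> = fa_smult (((-1) ^ s * (-1) ^ ((r-s) * s)) * (-1) ^ ((r-s) choose 2)) (fa_mult (egen s) (\<gamma> (hgen (r-s))))"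
        by (simp add: fa_mult_smult_right)
      also have "((-1) ^ s * (-1) ^ ((r-s) * s)) * (-1) ^ ((r-s) choose 2) = ((-1::'k) ^ (r choose 2)) * ((-1) ^ s * (-1) ^ (s choose 2))"
        using sign_rec[of s "r-s"] s by simp
      finally show ?thesis by (simp add: A_def)
    qed
    have "osym_eq (st (hgen r)) (fa_smult (-1) (fsum {1..r} B))" by (rule s1)
    also have "osym_eq \<dots> (fa_smult (-1) (fsum {1..r} (\<lambda>s. fa_smult ((-1) ^ (r choose 2)) (A s))))"
      by (intro osym_eq_smult osym_eq_fsum bs) auto
    also have "\<dots> = fa_smult ((-1) ^ (r choose 2)) (fa_smult (-1) (fsum {1..r} A))"
      by (simp add: fsum_smult mult.commute)
    also have "osym_eq \<dots> (fa_smult ((-1) ^ (r choose 2)) (\<gamma> (hgen r)))"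
      by (rule osym_eq_smult, rule osym_eq_sym, rule g1)
    finally show ?thesis .
  qed
qed

lemma part1: "osym_eq (\<gamma> (hgen r)) (fa_smult ((-1) ^ (r choose 2)) (st (hgen r))) \<and>
              osym_eq (\<gamma> (egen r)) (fa_smult ((-1) ^ (r choose 2)) (st (egen r)))"
proof
  have "osym_eq (fa_smult ((-1) ^ (r choose 2)) (st (hgen r)))
          (fa_smult ((-1) ^ (r choose 2)) (fa_smult ((-1) ^ (r choose 2)) (\<gamma> (hgen r))))"
    by (intro osym_eq_smult st_h)
  then have "osym_eq (fa_smult ((-1) ^ (r choose 2)) (st (hgen r))) (\<gamma> (hgen r))"
    by simp
  then show "osym_eq (\<gamma> (hgen r)) (fa_smult ((-1) ^ (r choose 2)) (st (hgen r)))"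
    by (rule osym_eq_sym)
next
  have "osym_eq (\<gamma> (egen r)) (fa_smult ((-1) ^ (r choose 2)) (egen r))" by (rule gamma_e_all)
  also have "osym_eq \<dots> (fa_smult ((-1) ^ (r choose 2)) (st (egen r)))"
    by (rule osym_eq_smult, rule osym_eq_sym, rule st_e_all)
  finally show "osym_eq (\<gamma> (egen r)) (fa_smult ((-1) ^ (r choose 2)) (st (egen r)))" .
qed

end



fun hm :: "nat list \<Rightarrow> 'k::field fa" where
  "hm [] = fa_one"
| "hm (r # w) = fa_mult (hgen r) (hm w)"

fun em :: "nat list \<Rightarrow> 'k::field fa" where
  "em [] = fa_one"
| "em (r # w) = fa_mult (egen r) (em w)"

fun inv_w :: "nat list \<Rightarrow> nat" where
  "inv_w [] = 0"
| "inv_w (r # w) = r * sum_list w + inv_w w"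

fun cs :: "nat list \<Rightarrow> nat" where
  "cs [] = 0"
| "cs (r # w) = (r choose 2) + cs w"

lemma hm_append: "(hm (u @ v) :: 'k::field fa) = fa_mult (hm u) (hm v)"
  by (induction u) (simp_all add: fa_mult_assoc)
lemma em_append: "(em (u @ v) :: 'k::field fa) = fa_mult (em u) (em v)"
  by (induction u) (simp_all add: fa_mult_assoc)
lemma FA_hm[simp]: "(hm w :: 'k::field fa) \<in> FA"
  by (induction w) simp_all
lemma FA_em[simp]: "(em w :: 'k::field fa) \<in> FA"
  by (induction w) simp_all

lemma pure_hm: "pure (sum_list w mod 2) (hm w :: 'k::field fa)"
proof (induction w)
  case Nil then show ?case by simp
next
  case (Cons r w)
  have "pure ((r mod 2 + sum_list w mod 2) mod 2) (fa_mult (hgen r) (hm w) :: 'k fa)"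
    by (rule pure_mult[OF pure_hgen Cons])
  then show ?case by (simp add: mod_add_eq)
qed

lemma pure_em: "pure (sum_list w mod 2) (em w :: 'k::field fa)"
proof (induction w)
  case Nil then show ?case by simp
next
  case (Cons r w)
  have "pure ((r mod 2 + sum_list w mod 2) mod 2) (fa_mult (egen r) (em w) :: 'k fa)"
    by (rule pure_mult[OF pure_egen Cons])
  then show ?case by (simp add: mod_add_eq)
qed

lemma gen_mult_ind: "fa_mult (fa_gen r) (\<lambda>u. if u = w then 1 else 0) = (\<lambda>u. if u = r # w then (1::'k::field) else 0)"
proof
  fix u :: "nat list"
  have t: "(if take i u = [r] then 1 else 0) * (if drop i u = w then 1 else 0) =
           (if i = 1 then (if u = r # w then 1 else 0) else (0::'k))" if "i \<le> length u" for i
  proof (cases "take i u = [r] \<and> drop i u = w")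
    case True
    then have "length (take i u) = 1" by simp
    then have "i = 1" using that by simp
    moreover have "u = r # w" using True by (metis append_Cons append_Nil append_take_drop_id)
    ultimately show ?thesis using True by simp
  next
    case False
    then show ?thesis by auto
  qed
  have "fa_mult (fa_gen r) (\<lambda>u. if u = w then 1 else 0) u =
        (\<Sum>i\<le>length u. if i = 1 then (if u = r # w then 1 else 0) else (0::'k))"
    unfolding fa_mult_def fa_gen_def by (rule sum.cong) (simp_all add: t)
  also have "\<dots> = (if u = r # w then 1 else 0)" by (simp add: sum.delta)
  finally show "fa_mult (fa_gen r) (\<lambda>u. if u = w then 1 else 0) u = (if u = r # w then 1 else (0::'k))" .
qed

lemma hm_ind: "0 \<notin> set w \<Longrightarrow> (hm w :: 'k::field fa) = (\<lambda>u. if u = w then 1 else 0)"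
proof (induction w)
  case Nil then show ?case by (simp add: fa_one_def)
next
  case (Cons r w)
  then have "r \<noteq> 0" "0 \<notin> set w" by auto
  then show ?case using Cons by (simp add: hgen_def gen_mult_ind)
qed

lemma decomp: assumes a: "a \<in> FA"
  shows "a = fsum {w. a w \<noteq> 0} (\<lambda>w. fa_smult (a w) (hm w))"
proof
  fix u
  define S where "S = {w. a w \<noteq> 0}"
  have fin: "finite S" using a by (simp add: FA_def S_def)
  have "fsum S (\<lambda>w. fa_smult (a w) (hm w)) u = (\<Sum>w\<in>S. if u = w then a w else 0)"
    unfolding fsum_def fa_smult_def
  proof (rule sum.cong)
    fix w assume "w \<in> S"
    then have "0 \<notin> set w" using a by (simp add: FA_def S_def)
    then show "a w * hm w u = (if u = w then a w else 0)" by (simp add: hm_ind)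
  qed simp
  also have "\<dots> = a u" using fin by (simp add: sum.delta' S_def)
  finally show "a u = fsum {w. a w \<noteq> 0} (\<lambda>w. fa_smult (a w) (hm w)) u" by (simp add: S_def)
qed




context OS begin

lemma psi_h_all: "osym_eq (\<psi> (hgen r)) (fa_smult ((-1) ^ r) (egen r))"
proof (cases "r = 0")
  case True then show ?thesis using hom_one[OF psi_hom] by (simp add: hgen_def)
next
  case False then show ?thesis using psi_h by simp
qed

lemma st_st: "a \<in> FA \<Longrightarrow> osym_eq (st (st a)) a"
  using st_inv by (simp add: osym_involutive_def)

lemma psi_hm: "osym_eq (\<psi> (hm w)) (fa_smult ((-1) ^ sum_list w) (em w))"
proof (induction w)
  case Nil then show ?case using hom_one[OF psi_hom] by simp
next
  case (Cons r w)
  have "osym_eq (\<psi> (hm (r # w))) (fa_mult (\<psi> (hgen r)) (\<psi> (hm w)))"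
    by (simp add: hom_mult[OF psi_hom])
  also have "osym_eq \<dots> (fa_mult (fa_smult ((-1) ^ r) (egen r)) (fa_smult ((-1) ^ sum_list w) (em w)))"
    by (rule osym_eq_mult[OF _ _ psi_h_all Cons]) simp_all
  also have "\<dots> = fa_smult ((-1) ^ sum_list (r # w)) (em (r # w))"
    by (simp add: fa_mult_smult_left fa_mult_smult_right power_add mult.commute)
  finally show ?case .
qed

lemma gamma_em: "osym_eq (\<gamma> (em w)) (fa_smult ((-1) ^ cs w) (em w))"
proof (induction w)
  case Nil then show ?case using hom_one[OF gamma_hom] by simp
next
  case (Cons r w)
  have "osym_eq (\<gamma> (em (r # w))) (fa_mult (\<gamma> (egen r)) (\<gamma> (em w)))"
    by (simp add: hom_mult[OF gamma_hom])
  also have "osym_eq \<dots> (fa_mult (fa_smult ((-1) ^ (r choose 2)) (egen r)) (fa_smult ((-1) ^ cs w) (em w)))"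
    by (rule osym_eq_mult[OF _ _ gamma_e_all Cons]) simp_all
  also have "\<dots> = fa_smult ((-1) ^ cs (r # w)) (em (r # w))"
    by (simp add: fa_mult_smult_left fa_mult_smult_right power_add mult.commute)
  finally show ?case .
qed

lemma st_em: "osym_eq (st (em w)) (fa_smult ((-1) ^ inv_w w) (em (rev w)))"
proof (induction w)
  case Nil then show ?case using anti_one[OF st_anti] by simp
next
  case (Cons r w)
  have "osym_eq (st (em (r # w))) (fa_smult ((-1) ^ ((r mod 2) * (sum_list w mod 2))) (fa_mult (st (em w)) (st (egen r))))"
    by (simp add: anti_mult[OF st_anti _ _ pure_egen pure_em])
  also have "osym_eq \<dots> (fa_smult ((-1) ^ ((r mod 2) * (sum_list w mod 2))) (fa_mult (fa_smult ((-1) ^ inv_w w) (em (rev w))) (egen r)))"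
    by (rule osym_eq_smult, rule osym_eq_mult[OF _ _ Cons st_e_all]) simp_all
  also have "\<dots> = fa_smult ((-1) ^ inv_w (r # w)) (em (rev (r # w)))"
    by (simp add: fa_mult_smult_left sign_mod power_add em_append mult.commute)
  finally show ?case .
qed

lemma gamma_hm: "osym_eq (\<gamma> (hm w)) (fa_smult ((-1) ^ (cs w + inv_w w)) (st (hm (rev w))))"
proof (induction w)
  case Nil then show ?case
    using osym_eq_trans[OF hom_one[OF gamma_hom] osym_eq_sym[OF anti_one[OF st_anti]]] by simp
next
  case (Cons r w)
  define \<sigma> :: 'k where "\<sigma> = (-1) ^ ((sum_list (rev w) mod 2) * (r mod 2))"
  have anti: "osym_eq (st (fa_mult (hm (rev w)) (hgen r))) (fa_smult \<sigma> (fa_mult (st (hgen r)) (st (hm (rev w)))))"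
    unfolding \<sigma>_def by (rule anti_mult[OF st_anti _ _ pure_hm pure_hgen]) simp_all
  have sq: "\<sigma> * \<sigma> = 1" unfolding \<sigma>_def by simp
  have anti2: "osym_eq (fa_mult (st (hgen r)) (st (hm (rev w)))) (fa_smult \<sigma> (st (hm (rev (r # w)))))"
  proof -
    have "osym_eq (fa_smult \<sigma> (st (fa_mult (hm (rev w)) (hgen r)))) (fa_smult \<sigma> (fa_smult \<sigma> (fa_mult (st (hgen r)) (st (hm (rev w))))))"
      by (rule osym_eq_smult[OF anti])
    then have "osym_eq (fa_smult \<sigma> (st (hm (rev (r # w))))) (fa_mult (st (hgen r)) (st (hm (rev w))))"
      by (simp add: sq hm_append)
    then show ?thesis by (rule osym_eq_sym)
  qed
  have "osym_eq (\<gamma> (hm (r # w))) (fa_mult (\<gamma> (hgen r)) (\<gamma> (hm w)))"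
    by (simp add: hom_mult[OF gamma_hom])
  also have "osym_eq \<dots> (fa_mult (fa_smult ((-1) ^ (r choose 2)) (st (hgen r))) (fa_smult ((-1) ^ (cs w + inv_w w)) (st (hm (rev w)))))"
    by (rule osym_eq_mult[OF _ _ conjunct1[OF part1] Cons]) simp_all
  also have "\<dots> = fa_smult ((-1) ^ (r choose 2) * (-1) ^ (cs w + inv_w w)) (fa_mult (st (hgen r)) (st (hm (rev w))))"
    by (simp add: fa_mult_smult_left fa_mult_smult_right mult.commute)
  also have "osym_eq \<dots> (fa_smult ((-1) ^ (r choose 2) * (-1) ^ (cs w + inv_w w)) (fa_smult \<sigma> (st (hm (rev (r # w))))))"
    by (rule osym_eq_smult[OF anti2])
  also have "\<dots> = fa_smult ((-1) ^ (cs (r # w) + inv_w (r # w))) (st (hm (rev (r # w))))"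
    by (simp add: \<sigma>_def sign_mod power_add mult.commute mult.left_commute)
  finally show ?case .
qed

lemma F_hm: "osym_eq (st (\<gamma> (\<psi> (hm w)))) (fa_smult ((-1) ^ (sum_list w + cs w + inv_w w)) (em (rev w)))"
proof -
  have "osym_eq (\<gamma> (\<psi> (hm w))) (\<gamma> (fa_smult ((-1) ^ sum_list w) (em w)))"
    by (rule lin_resp[OF gamma_lin _ _ psi_hm]) simp_all
  also have "osym_eq \<dots> (fa_smult ((-1) ^ sum_list w) (\<gamma> (em w)))"
    by (rule lin_smult[OF gamma_lin]) simp
  also have "osym_eq \<dots> (fa_smult ((-1) ^ sum_list w) (fa_smult ((-1) ^ cs w) (em w)))"
    by (rule osym_eq_smult[OF gamma_em])
  finally have 1: "osym_eq (\<gamma> (\<psi> (hm w))) (fa_smult ((-1) ^ sum_list w * (-1) ^ cs w) (em w))" by simp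
  have "osym_eq (st (\<gamma> (\<psi> (hm w)))) (st (fa_smult ((-1) ^ sum_list w * (-1) ^ cs w) (em w)))"
    by (rule lin_resp[OF st_lin _ _ 1]) simp_all
  also have "osym_eq \<dots> (fa_smult ((-1) ^ sum_list w * (-1) ^ cs w) (st (em w)))"
    by (rule lin_smult[OF st_lin]) simp
  also have "osym_eq \<dots> (fa_smult ((-1) ^ sum_list w * (-1) ^ cs w) (fa_smult ((-1) ^ inv_w w) (em (rev w))))"
    by (rule osym_eq_smult[OF st_em])
  also have "\<dots> = fa_smult ((-1) ^ (sum_list w + cs w + inv_w w)) (em (rev w))"
    by (simp add: power_add)
  finally show ?thesis .
qed

lemma G_hm: "osym_eq (\<psi> (st (\<gamma> (hm w)))) (fa_smult ((-1) ^ (sum_list w + cs w + inv_w w)) (em (rev w)))"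
proof -
  have "osym_eq (st (\<gamma> (hm w))) (st (fa_smult ((-1) ^ (cs w + inv_w w)) (st (hm (rev w)))))"
    by (rule lin_resp[OF st_lin _ _ gamma_hm]) simp_all
  also have "osym_eq \<dots> (fa_smult ((-1) ^ (cs w + inv_w w)) (st (st (hm (rev w)))))"
    by (rule lin_smult[OF st_lin]) simp
  also have "osym_eq \<dots> (fa_smult ((-1) ^ (cs w + inv_w w)) (hm (rev w)))"
    by (rule osym_eq_smult[OF st_st]) simp
  finally have 1: "osym_eq (st (\<gamma> (hm w))) (fa_smult ((-1) ^ (cs w + inv_w w)) (hm (rev w)))" .
  have "osym_eq (\<psi> (st (\<gamma> (hm w)))) (\<psi> (fa_smult ((-1) ^ (cs w + inv_w w)) (hm (rev w))))"
    by (rule lin_resp[OF psi_lin _ _ 1]) simp_all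
  also have "osym_eq \<dots> (fa_smult ((-1) ^ (cs w + inv_w w)) (\<psi> (hm (rev w))))"
    by (rule lin_smult[OF psi_lin]) simp
  also have "osym_eq \<dots> (fa_smult ((-1) ^ (cs w + inv_w w)) (fa_smult ((-1) ^ sum_list (rev w)) (em (rev w))))"
    by (rule osym_eq_smult[OF psi_hm])
  also have "\<dots> = fa_smult ((-1) ^ (sum_list w + cs w + inv_w w)) (em (rev w))"
    by (simp add: power_add sum_list_rev mult.commute mult.left_commute)
  finally show ?thesis .
qed

lemma part2: assumes a: "a \<in> FA" shows "osym_eq (st (\<gamma> (\<psi> a))) (\<psi> (st (\<gamma> a)))"
proof -
  define S where "S = {w. a w \<noteq> 0}"
  have fin: "finite S" using a by (simp add: FA_def S_def)
  have linF: "osym_linear (\<lambda>x. st (\<gamma> (\<psi> x)))"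
    using lin_comp[OF st_lin lin_comp[OF gamma_lin psi_lin]] by simp
  have linG: "osym_linear (\<lambda>x. \<psi> (st (\<gamma> x)))"
    using lin_comp[OF psi_lin lin_comp[OF st_lin gamma_lin]] by simp
  define b where "b = fsum S (\<lambda>w. fa_smult (a w) (hm w))"
  have ab: "a = b" unfolding b_def S_def by (rule decomp[OF a])
  have LF: "osym_eq (st (\<gamma> (\<psi> b))) (fsum S (\<lambda>w. fa_smult (a w) (st (\<gamma> (\<psi> (hm w))))))"
    unfolding b_def using lin_fsum[OF linF fin, of hm a] by simp
  have LG: "osym_eq (\<psi> (st (\<gamma> b))) (fsum S (\<lambda>w. fa_smult (a w) (\<psi> (st (\<gamma> (hm w))))))"
    unfolding b_def using lin_fsum[OF linG fin, of hm a] by simp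
  have "osym_eq (st (\<gamma> (\<psi> a))) (fsum S (\<lambda>w. fa_smult (a w) (st (\<gamma> (\<psi> (hm w))))))"
    using LF[folded ab] .
  also have "osym_eq \<dots> (fsum S (\<lambda>w. fa_smult (a w) (\<psi> (st (\<gamma> (hm w))))))"
  proof (rule osym_eq_fsum[OF fin], rule osym_eq_smult)
    fix w
    show "osym_eq (st (\<gamma> (\<psi> (hm w)))) (\<psi> (st (\<gamma> (hm w))))"
      by (rule osym_eq_trans[OF F_hm osym_eq_sym[OF G_hm]])
  qed
  also have "osym_eq \<dots> (\<psi> (st (\<gamma> a)))"
  proof (rule osym_eq_sym)
    show "osym_eq (\<psi> (st (\<gamma> a))) (fsum S (\<lambda>w. fa_smult (a w) (\<psi> (st (\<gamma> (hm w))))))"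
      using LG[folded ab] .
  qed
  finally show ?thesis .
qed

end

theorem mainTheorem7:
  fixes \<psi> \<gamma> st :: "'k::field fa \<Rightarrow> 'k fa"
  assumes char: "(2::'k) \<noteq> 0"
    and psi_hom: "osym_hom \<psi>" and psi_bij: "osym_bij \<psi>"
    and psi_h: "\<forall>r\<ge>1. osym_eq (\<psi> (hgen r)) (fa_smult ((-1) ^ r) (egen r))"
    and gamma_hom: "osym_hom \<gamma>" and gamma_inv: "osym_involutive \<gamma>"
    and gamma_e: "\<forall>r\<ge>1. osym_eq (\<gamma> (egen r)) (fa_smult ((-1) ^ (r choose 2)) (egen r))"
    and st_anti: "osym_super_antihom st" and st_inv: "osym_involutive st"
    and st_e: "\<forall>r\<ge>1. osym_eq (st (egen r)) (egen r)"
  shows "(\<forall>r. osym_eq (\<gamma> (hgen r)) (fa_smult ((-1) ^ (r choose 2)) (st (hgen r))) \<and>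
              osym_eq (\<gamma> (egen r)) (fa_smult ((-1) ^ (r choose 2)) (st (egen r)))) \<and>
         (\<forall>a\<in>FA. osym_eq (st (\<gamma> (\<psi> a))) (\<psi> (st (\<gamma> a))))"
proof -
  interpret OS \<psi> \<gamma> st
    using psi_hom psi_h gamma_hom gamma_inv gamma_e st_anti st_inv st_e by unfold_locales
  show ?thesis using part1 part2 by blast
qed



end
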